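(* Let $f:[0,1]^2\to[0,1]$ be any aggregator. Then the function $\lambda\mapsto R_\lambda(f)$ on $(0,1]$ is single-troughed: it is either monotone, or there is a point $\lambda_0$ such that $R_\lambda(f)$ is monotonically non-increasing for $\lambda\le\lambda_0$ and monotonically non-decreasing for $\lambda\ge\lambda_0$.
   Context: Setting: a binary world state $\omega\in\{0,1\}$ and two experts. An information structure $\theta$ consists of a prior $\mu=\Pr[\omega=1]\in(0,1)$ and finite signal spaces $\mathcal S_1,\mathcal S_2$ with a joint distribution of $(\omega,S_1,S_2)$ under which $S_1$ and $S_2$ are conditionally independent given $\omega$; $\Theta$ denotes the set of all such conditionally independent structures. Given a base rate consideration degree $\lambda\in(0,1]$, expert $i$ receiving signal $s_i$ reports $$x_i(s_i,\lambda)=\frac{\mu^\lambda\Pr[S_i=s_i\mid\omega=1]}{\mu^\lambda\Pr[S_i=s_i\mid\omega=1]+(1-\mu)^\lambda\Pr[S_i=s_i\mid\omega=0]},$$ i.e. the posterior odds equal $(\mu/(1-\mu))^\lambda$ times the likelihood ratio; $\lambda=1$ is the Bayesian posterior. Write $\mathbf x(\mathbf s,\lambda)=(x_1(s_1,\lambda),x_2(s_2,\lambda))$. The benchmark $f^*(\mathbf s)=\Pr_\theta[\omega=1\mid S_1=s_1,S_2=s_2]$ is the Bayesian aggregator with full knowledge of $\theta$. The loss is the squared loss $L(y,\omega)=(y-\omega)^2$. The regret of an aggregator $f:[0,1]^2\to[0,1]$ at degree $\lambda$ is $$R_\lambda(f)=\sup_{\theta\in\Theta}\mathbb E_\theta\big[L(f(\mathbf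 x(\mathbf s,\lambda)),\omega)-L(f^*(\mathbf s),\omega)\big].$$ *)

theory Defs
  imports Complex_Main
begin

text \<open>An information structure: prior mu = Pr[omega = 1], finite nonempty signal
  spaces S1, S2 (encoded as finite sets of naturals), and conditional signal
  distributions P_i omega s = Pr[S_i = s | omega] (omega = True means omega = 1).
  Conditional independence is built in: the joint probability of (omega, s1, s2)
  is Pr[omega] * P1 omega s1 * P2 omega s2.\<close>

type_synonym info_structure =
  "real \<times> nat set \<times> nat set \<times> (bool \<Rightarrow> nat \<Rightarrow> real) \<times> (bool \<Rightarrow> nat \<Rightarrow> real)"

definition cond_dist :: "nat set \<Rightarrow> (bool \<Rightarrow> nat \<Rightarrow> real) \<Rightarrow> bool" where
  "cond_dist S P \<longleftrightarrow> finite S \<and> S \<noteq> {} \<and>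
     (\<forall>w s. 0 \<le> P w s) \<and> (\<forall>w. (\<Sum>s\<in>S. P w s) = 1)"

definition valid_IS :: "info_structure \<Rightarrow> bool" where
  "valid_IS \<theta> = (case \<theta> of (mu, S1, S2, P1, P2) \<Rightarrow>
     0 < mu \<and> mu < 1 \<and> cond_dist S1 P1 \<and> cond_dist S2 P2)"

definition Theta :: "info_structure set" where
  "Theta = {\<theta>. valid_IS \<theta>}"

definition prior_w :: "real \<Rightarrow> bool \<Rightarrow> real" where
  "prior_w mu w = (if w then mu else 1 - mu)"

definition report :: "real \<Rightarrow> (bool \<Rightarrow> nat \<Rightarrow> real) \<Rightarrow> nat \<Rightarrow> real \<Rightarrow> real" where
  "report mu P s lam =
     mu powr lam * P True s / (mu powr lam * P True s + (1 - mu) powr lam * P False s)"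

definition bayes_post :: "info_structure \<Rightarrow> nat \<Rightarrow> nat \<Rightarrow> real" where
  "bayes_post \<theta> s1 s2 = (case \<theta> of (mu, S1, S2, P1, P2) \<Rightarrow>
     mu * P1 True s1 * P2 True s2 /
       (mu * P1 True s1 * P2 True s2 + (1 - mu) * P1 False s1 * P2 False s2))"

definition sq_loss :: "real \<Rightarrow> bool \<Rightarrow> real" where
  "sq_loss y w = (y - (if w then 1 else 0))\<^sup>2"

definition exp_regret :: "real \<Rightarrow> (real \<Rightarrow> real \<Rightarrow> real) \<Rightarrow> info_structure \<Rightarrow> real" where
  "exp_regret lam f \<theta> = (case \<theta> of (mu, S1, S2, P1, P2) \<Rightarrow>
     (\<Sum>w\<in>(UNIV::bool set). \<Sum>s1\<in>S1. \<Sum>s2\<in>S2.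
        prior_w mu w * P1 w s1 * P2 w s2 *
        (sq_loss (f (report mu P1 s1 lam) (report mu P2 s2 lam)) w
         - sq_loss (bayes_post \<theta> s1 s2) w)))"

definition regret :: "real \<Rightarrow> (real \<Rightarrow> real \<Rightarrow> real) \<Rightarrow> real" where
  "regret lam f = (SUP \<theta>\<in>Theta. exp_regret lam f \<theta>)"

end

theory Submission
  imports Defs
begin

lemma trough_abstract:
  fixes R :: "real \<Rightarrow> real"
  assumes Q: "\<And>a b c. 0 < a \<Longrightarrow> a < b \<Longrightarrow> b < c \<Longrightarrow> c \<le> 1 \<Longrightarrow> R b \<le> max (R a) (R c)"
  and L: "\<And>l r. 0 < l \<Longrightarrow> l \<le> 1 \<Longrightarrow> r < R l \<Longrightarrow>
            \<exists>d>0. \<forall>l'. 0 < l' \<and> l' \<le> 1 \<and> \<bar>l' - l\<bar> < d \<longrightarrow> r < R l'"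
  shows "mono_on {0<..1} R
       \<or> antimono_on {0<..1} R
       \<or> (\<exists>lam0\<in>{0<..1}.
            (\<forall>a b. 0 < a \<and> a \<le> b \<and> b \<le> lam0 \<longrightarrow> R b \<le> R a)
          \<and> (\<forall>a b. lam0 \<le> a \<and> a \<le> b \<and> b \<le> 1 \<longrightarrow> R a \<le> R b))"
proof -
  define B where "B = {b. 0 < b \<and> b \<le> 1 \<and> (\<exists>a. 0 < a \<and> a < b \<and> R a < R b)}"
  have F1: "R x \<le> R y" if "b \<in> B" "b \<le> x" "x \<le> y" "y \<le> 1" for b x y
  proof -
    from that(1) obtain a0 where a0: "0 < a0" "a0 < b" "R a0 < R b" "0 < b" unfolding B_def by auto
    have bx: "R b \<le> R x"
    proof (cases "b < x")
      case True
      with Q[of a0 b x] a0 that show ?thesis by auto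
    next
      case False with that show ?thesis by auto
    qed
    show ?thesis
    proof (cases "x < y")
      case True
      with Q[of a0 x y] a0 that bx show ?thesis by (smt (verit))
    next
      case False with that show ?thesis by auto
    qed
  qed
  have F2: "R y \<le> R x" if "0 < x" "x \<le> y" "\<forall>b\<in>B. y < b" "y \<le> 1" for x y
  proof (cases "x < y")
    case True
    have "y \<notin> B" using that by auto
    with True that show ?thesis unfolding B_def by auto
  qed (use that in auto)
  show ?thesis
  proof (cases "B = {}")
    case True
    have "antimono_on {0<..1} R"
      by (rule monotone_onI) (use F2 True in auto)
    then show ?thesis by blast
  next
    case Bne: False
    have bdd: "bdd_below B" unfolding B_def by (rule bdd_belowI[of _ 0]) auto
    define s where "s = Inf B"
    have s_le: "s \<le> b" if "b \<in> B" for b using bdd that cInf_lower s_def by blast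
    have s0: "0 \<le> s" unfolding s_def by (rule cInf_greatest[OF Bne]) (auto simp: B_def)
    have s1: "s \<le> 1" using Bne s_le B_def by fastforce
    have exB: "\<exists>b\<in>B. b < x" if "s < x" for x
      using that cInf_less_iff[OF Bne bdd] s_def by auto
    have right: "R x \<le> R y" if "s < x" "x \<le> y" "y \<le> 1" for x y
      using exB[OF that(1)] F1 that by force
    have left: "R y \<le> R x" if "0 < x" "x \<le> y" "y < s" for x y
      using F2[of x y] that s_le s1 by force
    show ?thesis
    proof (cases "s = 0")
      case True
      have "mono_on {0<..1} R"
        by (rule monotone_onI) (use right True in auto)
      then show ?thesis by blast
    next
      case False
      then have spos: "0 < s" using s0 by auto
      have A1: "R s \<le> R a" if "0 < a" "a < s" for a
      proof (rule ccontr)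
        assume "\<not> R s \<le> R a"
        then obtain d where d: "d > 0" "\<forall>l'. 0 < l' \<and> l' \<le> 1 \<and> \<bar>l' - s\<bar> < d \<longrightarrow> R a < R l'"
          using L[of s "R a"] spos s1 by auto
        define a' where "a' = (max a (s - d/2) + s) / 2"
        have "a < a'" "a' < s" "\<bar>a' - s\<bar> < d" using d that unfolding a'_def by (auto simp: max_def)
        then have "R a < R a'" using d that s1 by auto
        moreover have "R a' \<le> R a" using left[of a a'] \<open>a < a'\<close> \<open>a' < s\<close> that by auto
        ultimately show False by auto
      qed
      have A2: "R s \<le> R b" if "s < b" "b \<le> 1" for b
      proof (rule ccontr)
        assume "\<not> R s \<le> R b"
        then obtain d where d: "d > 0" "\<forall>l'. 0 < l' \<and> l' \<le> 1 \<and> \<bar>l' - s\<bar> < d \<longrightarrow> R b < R l'"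
          using L[of s "R b"] spos s1 by auto
        define a' where "a' = (min b (s + d/2) + s) / 2"
        have "s < a'" "a' < b" "\<bar>a' - s\<bar> < d" using d that unfolding a'_def by (auto simp: min_def)
        then have "R b < R a'" using d that spos by auto
        moreover have "R a' \<le> R b" using right[of a' b] \<open>s < a'\<close> \<open>a' < b\<close> that by auto
        ultimately show False by auto
      qed
      have "(\<forall>a b. 0 < a \<and> a \<le> b \<and> b \<le> s \<longrightarrow> R b \<le> R a)"
      proof (intro allI impI)
        fix a b assume h: "0 < a \<and> a \<le> b \<and> b \<le> s"
        show "R b \<le> R a"
        proof (cases "b < s")
          case True then show ?thesis using left h by auto
        next
          case False then have "b = s" using h by auto
          then show ?thesis using A1 h by (cases "a = s") auto
        qed
      qed
      moreover have "(\<forall>a b. s \<le> a \<and> a \<le> b \<and> b \<le> 1 \<longrightarrow> R a \<le> R b)"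
      proof (intro allI impI)
        fix a b assume h: "s \<le> a \<and> a \<le> b \<and> b \<le> 1"
        show "R a \<le> R b"
        proof (cases "s < a")
          case True then show ?thesis using right h by auto
        next
          case False then have "a = s" using h by auto
          then show ?thesis using A2 h by (cases "b = s") auto
        qed
      qed
      ultimately have "\<exists>lam0\<in>{0<..1}.
            (\<forall>a b. 0 < a \<and> a \<le> b \<and> b \<le> lam0 \<longrightarrow> R b \<le> R a)
          \<and> (\<forall>a b. lam0 \<le> a \<and> a \<le> b \<and> b \<le> 1 \<longrightarrow> R a \<le> R b)"
        using spos s1 by (intro bexI[of _ s]) auto
      then show ?thesis by blast
    qed
  qed
qed

definition Tm :: "real \<Rightarrow> real \<Rightarrow> real \<Rightarrow> real \<Rightarrow> real" where
  "Tm A B y v = (let p = v*A/(v*A+(1-v)*B) in v*A*((y-1)^2 - (p-1)^2) + (1-v)*B*(y^2 - p^2))"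

lemma bayes_opt:
  fixes a b y :: real assumes "0 \<le> a" "0 \<le> b"
  shows "a*(a/(a+b)-1)^2 + b*(a/(a+b))^2 \<le> a*(y-1)^2 + b*y^2"
proof (cases "a + b = 0")
  case True then have "a = 0" "b = 0" using assms by auto
  then show ?thesis by simp
next
  case False
  then have pos: "a + b > 0" using assms by auto
  define p where "p = a/(a+b)"
  have ea: "a = p*(a+b)" unfolding p_def using pos by simp
  have eb: "b = (1-p)*(a+b)" unfolding p_def using pos by (simp add: field_simps)
  have "a*(y-1)^2 + b*y^2 - (a*(p-1)^2 + b*p^2)
      = (a+b)*(p*(y-1)^2 + (1-p)*y^2 - p*(p-1)^2 - (1-p)*p^2)"
    by (subst ea, subst eb, subst ea, subst eb) (simp add: algebra_simps)
  also have "\<dots> = (a+b)*(y-p)^2" by (simp add: power2_eq_square algebra_simps)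
  finally have "a*(y-1)^2 + b*y^2 - (a*(p-1)^2 + b*p^2) = (a+b)*(y-p)^2" .
  moreover have "(a+b)*(y - p)^2 \<ge> 0" using pos by simp
  ultimately show ?thesis unfolding p_def by linarith
qed

lemma Tm_convex:
  assumes A: "0 \<le> A" and B: "0 \<le> B" and th: "0 \<le> t" "t \<le> 1"
    and v1: "0 \<le> v1" "v1 \<le> 1" and v3: "0 \<le> v3" "v3 \<le> 1"
  shows "Tm A B y (t*v1 + (1-t)*v3) \<le> t * Tm A B y v1 + (1-t) * Tm A B y v3"
proof -
  define v where "v = t*v1 + (1-t)*v3"
  define p where "p = v*A/(v*A+(1-v)*B)"
  define p1 where "p1 = v1*A/(v1*A+(1-v1)*B)"
  define p3 where "p3 = v3*A/(v3*A+(1-v3)*B)"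
  have o1: "v1*A*(p1-1)^2 + (1-v1)*B*p1^2 \<le> v1*A*(p-1)^2 + (1-v1)*B*p^2"
    unfolding p1_def by (rule bayes_opt) (use A B v1 in auto)
  have o3: "v3*A*(p3-1)^2 + (1-v3)*B*p3^2 \<le> v3*A*(p-1)^2 + (1-v3)*B*p^2"
    unfolding p3_def by (rule bayes_opt) (use A B v3 in auto)
  have "Tm A B y v = v*A*((y-1)^2 - (p-1)^2) + (1-v)*B*(y^2 - p^2)"
    unfolding Tm_def p_def Let_def by simp
  moreover have "Tm A B y v1 = v1*A*((y-1)^2 - (p1-1)^2) + (1-v1)*B*(y^2 - p1^2)"
    unfolding Tm_def p1_def Let_def by simp
  moreover have "Tm A B y v3 = v3*A*((y-1)^2 - (p3-1)^2) + (1-v3)*B*(y^2 - p3^2)"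
    unfolding Tm_def p3_def Let_def by simp
  moreover have "v*A*((y-1)^2 - (p-1)^2) + (1-v)*B*(y^2 - p^2)
     = t*(v1*A*((y-1)^2) + (1-v1)*B*y^2) + (1-t)*(v3*A*((y-1)^2) + (1-v3)*B*y^2)
       - (t*(v1*A*(p-1)^2 + (1-v1)*B*p^2) + (1-t)*(v3*A*(p-1)^2 + (1-v3)*B*p^2))"
    unfolding v_def by (simp add: algebra_simps)
  moreover have "t*Tm A B y v1 + (1-t)*Tm A B y v3
     = t*(v1*A*((y-1)^2) + (1-v1)*B*y^2) + (1-t)*(v3*A*((y-1)^2) + (1-v3)*B*y^2)
       - (t*(v1*A*(p1-1)^2 + (1-v1)*B*p1^2) + (1-t)*(v3*A*(p3-1)^2 + (1-v3)*B*p3^2))"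
    unfolding calculation(2,3) by (simp add: algebra_simps)
  moreover have "t*(v1*A*(p1-1)^2 + (1-v1)*B*p1^2) \<le> t*(v1*A*(p-1)^2 + (1-v1)*B*p^2)"
    using o1 th by (simp add: mult_left_mono)
  moreover have "(1-t)*(v3*A*(p3-1)^2 + (1-v3)*B*p3^2) \<le> (1-t)*(v3*A*(p-1)^2 + (1-v3)*B*p^2)"
    using o3 th by (simp add: mult_left_mono)
  ultimately have "Tm A B y v \<le> t * Tm A B y v1 + (1-t) * Tm A B y v3" by linarith
  then show ?thesis unfolding v_def .
qed

lemma Tm_le1:
  assumes "0 \<le> A" "0 \<le> B" "0 \<le> v" "v \<le> 1" "0 \<le> y" "y \<le> 1"
  shows "Tm A B y v \<le> v*A + (1-v)*B"
proof -
  define p where "p = v*A/(v*A+(1-v)*B)"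
  have "(1-y)^2 \<le> 1" "y^2 \<le> 1" using assms by (auto intro!: power_le_one)
  then have "(y-1)^2 \<le> 1" "y^2 \<le> 1" by (simp_all add: power2_commute)
  moreover have "0 \<le> (p-1)^2" "0 \<le> p^2" by simp_all
  ultimately have "(y-1)^2 - (p-1)^2 \<le> 1" "y^2 - p^2 \<le> 1" by linarith+
  then have "v*A*((y-1)^2 - (p-1)^2) \<le> v*A" "(1-v)*B*(y^2 - p^2) \<le> (1-v)*B"
    using assms by (auto intro!: mult_left_le simp: mult_nonneg_nonneg)
  then show ?thesis unfolding Tm_def Let_def p_def[symmetric] by linarith
qed

lemma exp_regret_Tm:
  "exp_regret lam f (v, S1, S2, P1, P2) =
   (\<Sum>s1\<in>S1. \<Sum>s2\<in>S2. Tm (P1 True s1 * P2 True s2) (P1 False s1 * P2 False s2)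
        (f (report v P1 s1 lam) (report v P2 s2 lam)) v)"
proof -
  have U: "(UNIV::bool set) = {True, False}" by auto
  show ?thesis
    unfolding exp_regret_def U
    by (simp add: sum.distrib[symmetric] Tm_def Let_def prior_w_def sq_loss_def bayes_post_def
        algebra_simps)
qed

lemma report_odds:
  assumes "0 < mu" "mu < 1"
  shows "report mu P s lam = ((mu/(1-mu)) powr lam * P True s) /
            ((mu/(1-mu)) powr lam * P True s + P False s)"
proof -
  have c: "(1-mu) powr lam > 0" using assms by simp
  have m: "mu powr lam = (mu/(1-mu)) powr lam * (1-mu) powr lam"
    using assms by (simp add: powr_divide)
  define K where "K = (mu/(1-mu)) powr lam"
  define c where "c = (1-mu) powr lam"
  have "report mu P s lam = (c*(K*P True s))/(c*(K*P True s + P False s))"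
    unfolding report_def m K_def[symmetric] c_def[symmetric] by (simp add: algebra_simps)
  also have "\<dots> = (K*P True s)/(K*P True s + P False s)" using c unfolding c_def by simp
  finally show ?thesis unfolding K_def .
qed

definition mo :: "real \<Rightarrow> real \<Rightarrow> real \<Rightarrow> real" where
  "mo mu lam lam' = ((mu/(1-mu)) powr (lam/lam')) / (1 + (mu/(1-mu)) powr (lam/lam'))"

lemma mo_bounds: assumes "0 < mu" "mu < 1" shows "0 < mo mu lam lam' \<and> mo mu lam lam' < 1"
proof -
  define k where "k = (mu/(1-mu)) powr (lam/lam')"
  have "0 < k" using assms unfolding k_def by simp
  then show ?thesis unfolding mo_def k_def[symmetric] by (auto simp: divide_simps)
qed

lemma mo_odds: assumes "0 < mu" "mu < 1"
  shows "mo mu lam lam' / (1 - mo mu lam lam') = (mu/(1-mu)) powr (lam/lam')"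
proof -
  define k where "k = (mu/(1-mu)) powr (lam/lam')"
  have "k > 0" unfolding k_def using assms by simp
  then show ?thesis unfolding mo_def k_def[symmetric] by (simp add: field_simps)
qed

lemma mo_self: assumes "0 < mu" "mu < 1" "lam \<noteq> 0" shows "mo mu lam lam = mu"
  using assms unfolding mo_def by (simp add: field_simps)

lemma report_mo:
  assumes "0 < mu" "mu < 1" "lam' \<noteq> 0"
  shows "report (mo mu lam lam') P s lam' = report mu P s lam"
proof -
  have b: "0 < mo mu lam lam'" "mo mu lam lam' < 1" using mo_bounds assms by auto
  have "(mo mu lam lam' / (1 - mo mu lam lam')) powr lam' = (mu/(1-mu)) powr lam"
    unfolding mo_odds[OF assms(1,2)] using assms by (simp add: powr_powr)
  then show ?thesis using report_odds[OF b] report_odds[OF assms(1,2)] by simp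
qed

lemma report_01: "0 \<le> report mu P s lam \<and> report mu P s lam \<le> 1"
  if "0 \<le> P True s" "0 \<le> P False s" for mu P s lam
proof -
  have "0 \<le> mu powr lam * P True s" "0 \<le> (1-mu) powr lam * P False s" using that by auto
  then show ?thesis unfolding report_def by (auto simp: divide_simps)
qed

lemma isCont_mo: assumes "0 < mu" "mu < 1" "l' \<noteq> 0"
  shows "isCont (\<lambda>x. mo mu l x) l'"
proof -
  have "0 < (mu/(1-mu)) powr (l/l')" using assms by simp
  then have "1 + (mu/(1-mu)) powr (l/l') \<noteq> 0" by linarith
  then show ?thesis unfolding mo_def using assms
    by (intro continuous_intros) auto
qed

lemma isCont_Tm: assumes "0 \<le> A" "0 \<le> B" "isCont h x" "0 < h x" "h x < 1"
  shows "isCont (\<lambda>z. Tm A B y (h z)) x"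
proof (cases "A = 0 \<and> B = 0")
  case True
  then have "(\<lambda>z. Tm A B y (h z)) = (\<lambda>z. 0)" by (auto simp: Tm_def Let_def fun_eq_iff)
  then show ?thesis by simp
next
  case False
  have "h x * A + (1 - h x) * B > 0"
  proof -
    have "h x * A \<ge> 0" "(1 - h x) * B \<ge> 0" using assms by auto
    moreover have "h x * A > 0 \<or> (1 - h x) * B > 0" using False assms by auto
    ultimately show ?thesis by linarith
  qed
  then show ?thesis unfolding Tm_def Let_def using assms
    by (intro continuous_intros) auto
qed

lemma between_comb: fixes x z m :: real
  assumes "min x z \<le> m" "m \<le> max x z"
  shows "\<exists>t. 0 \<le> t \<and> t \<le> 1 \<and> m = t*x + (1-t)*z"
proof (cases "x = z")
  case True then show ?thesis using assms by (intro exI[of _ 1]) auto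
next
  case False
  define t where "t = (m - z)/(x - z)"
  have "t*(x-z) = m - z" unfolding t_def using False by simp
  then have "m = t*x + (1-t)*z" by (simp add: algebra_simps)
  moreover have "0 \<le> t \<and> t \<le> 1" unfolding t_def using False assms
    by (cases "x < z") (auto simp: divide_simps min_def max_def split: if_splits)
  ultimately show ?thesis by blast
qed

lemma g_mono: fixes x y :: real assumes "0 \<le> x" "x \<le> y" shows "x/(1+x) \<le> y/(1+y)"
proof -
  have "x * (1 + y) \<le> y * (1 + x)" using assms by (simp add: algebra_simps)
  then show ?thesis using assms by (simp add: divide_simps)
qed

lemma mo_between:
  assumes mu: "0 < mu" "mu < 1" and abc: "0 < a" "a < b" "b < c"
  shows "min (mo mu b a) (mo mu b c) \<le> mu \<and> mu \<le> max (mo mu b a) (mo mu b c)"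
proof -
  define od where "od = mu/(1-mu)"
  have o0: "0 < od" unfolding od_def using mu by simp
  have mu_eq: "mu = od/(1+od)" unfolding od_def using mu by (simp add: field_simps)
  have ma: "mo mu b a = od powr (b/a) / (1 + od powr (b/a))" unfolding mo_def od_def ..
  have mc: "mo mu b c = od powr (b/c) / (1 + od powr (b/c))" unfolding mo_def od_def ..
  have e1: "1 \<le> b/a" "b/c \<le> 1" using abc by (auto simp: divide_simps)
  show ?thesis
  proof (cases "1 \<le> od")
    case True
    have "od powr (b/c) \<le> od powr 1" "od powr 1 \<le> od powr (b/a)"
      using powr_mono[OF e1(2) True] powr_mono[OF e1(1) True] by auto
    then have "od powr (b/c) \<le> od" "od \<le> od powr (b/a)" using o0 by auto
    then have "mo mu b c \<le> od/(1+od)" "od/(1+od) \<le> mo mu b a" unfolding ma mc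
      using o0 by (auto intro!: g_mono)
    then have "mo mu b c \<le> mu" "mu \<le> mo mu b a" using mu_eq by auto
    then show ?thesis by auto
  next
    case False
    have "od powr (b/a) \<le> od powr 1" "od powr 1 \<le> od powr (b/c)"
      using powr_mono'[of 1 "b/a" od] powr_mono'[of "b/c" 1 od] False o0 e1 by auto
    then have "od powr (b/a) \<le> od" "od \<le> od powr (b/c)" using o0 by auto
    then have "mo mu b a \<le> od/(1+od)" "od/(1+od) \<le> mo mu b c" unfolding ma mc
      using o0 by (auto intro!: g_mono)
    then have "mo mu b a \<le> mu" "mu \<le> mo mu b c" using mu_eq by auto
    then show ?thesis by auto
  qed
qed

lemma valid_unfold: "valid_IS (mu, S1, S2, P1, P2) \<longleftrightarrow> 0 < mu \<and> mu < 1 \<and> cond_dist S1 P1 \<and> cond_dist S2 P2"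
  unfolding valid_IS_def by simp

lemma exp_le1:
  assumes fb: "\<forall>x y. 0 \<le> x \<and> x \<le> 1 \<and> 0 \<le> y \<and> y \<le> 1 \<longrightarrow> 0 \<le> f x y \<and> f x y \<le> 1"
  and v: "valid_IS (mu, S1, S2, P1, P2)"
  shows "exp_regret lam f (mu, S1, S2, P1, P2) \<le> 1"
proof -
  from v have mu: "0 < mu" "mu < 1" and c1: "cond_dist S1 P1" and c2: "cond_dist S2 P2"
    by (auto simp: valid_unfold)
  have n1: "\<And>w s. 0 \<le> P1 w s" and n2: "\<And>w s. 0 \<le> P2 w s"
    and s1: "\<And>w. (\<Sum>s\<in>S1. P1 w s) = 1" and s2: "\<And>w. (\<Sum>s\<in>S2. P2 w s) = 1"
    using c1 c2 unfolding cond_dist_def by auto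
  have "exp_regret lam f (mu, S1, S2, P1, P2) \<le>
     (\<Sum>s1\<in>S1. \<Sum>s2\<in>S2. mu * (P1 True s1 * P2 True s2) + (1-mu) * (P1 False s1 * P2 False s2))"
    unfolding exp_regret_Tm
  proof (intro sum_mono Tm_le1)
    fix s1 s2
    show "0 \<le> P1 True s1 * P2 True s2" "0 \<le> P1 False s1 * P2 False s2" using n1 n2 by auto
    show "0 \<le> mu" "mu \<le> 1" using mu by auto
    have "0 \<le> report mu P1 s1 lam \<and> report mu P1 s1 lam \<le> 1"
         "0 \<le> report mu P2 s2 lam \<and> report mu P2 s2 lam \<le> 1"
      using report_01 n1 n2 by auto
    then show "0 \<le> f (report mu P1 s1 lam) (report mu P2 s2 lam)"
      "f (report mu P1 s1 lam) (report mu P2 s2 lam) \<le> 1" using fb by auto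
  qed
  also have "\<dots> = mu * (\<Sum>s1\<in>S1. \<Sum>s2\<in>S2. P1 True s1 * P2 True s2)
      + (1-mu) * (\<Sum>s1\<in>S1. \<Sum>s2\<in>S2. P1 False s1 * P2 False s2)"
    by (simp add: sum.distrib sum_distrib_left)
  also have "\<dots> = mu * ((\<Sum>s\<in>S1. P1 True s) * (\<Sum>s\<in>S2. P2 True s))
      + (1-mu) * ((\<Sum>s\<in>S1. P1 False s) * (\<Sum>s\<in>S2. P2 False s))"
    by (simp only: sum_product)
  also have "\<dots> = 1" using s1 s2 by simp
  finally show ?thesis .
qed

lemma Theta_ne: "Theta \<noteq> {}"
proof -
  define P :: "bool \<Rightarrow> nat \<Rightarrow> real" where "P = (\<lambda>w s. if s = 0 then 1 else 0)"
  have "cond_dist {0} P" unfolding cond_dist_def P_def by auto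
  then have "(1/2, {0}, {0}, P, P) \<in> Theta" unfolding Theta_def by (simp add: valid_unfold)
  then show ?thesis by auto
qed

lemma bdd:
  assumes fb: "\<forall>x y. 0 \<le> x \<and> x \<le> 1 \<and> 0 \<le> y \<and> y \<le> 1 \<longrightarrow> 0 \<le> f x y \<and> f x y \<le> 1"
  shows "bdd_above ((\<lambda>\<theta>. exp_regret lam f \<theta>) ` Theta)"
proof (rule bdd_aboveI[of _ 1])
  fix x assume "x \<in> (\<lambda>\<theta>. exp_regret lam f \<theta>) ` Theta"
  then obtain mu S1 S2 P1 P2 where "x = exp_regret lam f (mu, S1, S2, P1, P2)"
    "valid_IS (mu, S1, S2, P1, P2)" unfolding Theta_def by auto
  then show "x \<le> 1" using exp_le1[OF fb] by auto
qed

lemma regret_ge: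
  assumes fb: "\<forall>x y. 0 \<le> x \<and> x \<le> 1 \<and> 0 \<le> y \<and> y \<le> 1 \<longrightarrow> 0 \<le> f x y \<and> f x y \<le> 1"
  and "\<theta> \<in> Theta"
  shows "exp_regret lam f \<theta> \<le> regret lam f"
  unfolding regret_def by (rule cSUP_upper[OF assms(2) bdd[OF fb]])

lemma mo_valid: "valid_IS (mu, S1, S2, P1, P2) \<Longrightarrow> (mo mu l l', S1, S2, P1, P2) \<in> Theta"
  unfolding Theta_def using mo_bounds by (auto simp: valid_unfold)

lemma exp_mo:
  assumes "0 < mu" "mu < 1" "l' \<noteq> 0"
  shows "exp_regret l' f (mo mu l l', S1, S2, P1, P2) =
    (\<Sum>s1\<in>S1. \<Sum>s2\<in>S2. Tm (P1 True s1 * P2 True s2) (P1 False s1 * P2 False s2)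
        (f (report mu P1 s1 l) (report mu P2 s2 l)) (mo mu l l'))"
  unfolding exp_regret_Tm report_mo[OF assms] ..

lemma regQ:
  assumes fb: "\<forall>x y. 0 \<le> x \<and> x \<le> 1 \<and> 0 \<le> y \<and> y \<le> 1 \<longrightarrow> 0 \<le> f x y \<and> f x y \<le> 1"
  and abc: "0 < a" "a < b" "b < c"
  shows "regret b f \<le> max (regret a f) (regret c f)"
  unfolding regret_def[of b]
proof (rule cSUP_least[OF Theta_ne])
  fix \<theta> assume th: "\<theta> \<in> Theta"
  obtain mu S1 S2 P1 P2 where te: "\<theta> = (mu, S1, S2, P1, P2)" by (cases \<theta>) auto
  have v: "valid_IS (mu, S1, S2, P1, P2)" using th te unfolding Theta_def by simp
  then have mu: "0 < mu" "mu < 1" and c1: "cond_dist S1 P1" and c2: "cond_dist S2 P2"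
    by (auto simp: valid_unfold)
  have n1: "\<And>w s. 0 \<le> P1 w s" and n2: "\<And>w s. 0 \<le> P2 w s"
    using c1 c2 unfolding cond_dist_def by auto
  define T where "T = (\<lambda>v. \<Sum>s1\<in>S1. \<Sum>s2\<in>S2. Tm (P1 True s1 * P2 True s2) (P1 False s1 * P2 False s2)
        (f (report mu P1 s1 b) (report mu P2 s2 b)) v)"
  have eb: "exp_regret b f \<theta> = T mu"
    unfolding te T_def exp_regret_Tm ..
  have ea: "T (mo mu b a) \<le> regret a f"
  proof -
    have "T (mo mu b a) = exp_regret a f (mo mu b a, S1, S2, P1, P2)"
      unfolding T_def using exp_mo[OF mu, where l=b and l'=a and f=f] abc by simp
    also have "\<dots> \<le> regret a f" by (rule regret_ge[OF fb mo_valid[OF v]])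
    finally show ?thesis .
  qed
  have ec: "T (mo mu b c) \<le> regret c f"
  proof -
    have "T (mo mu b c) = exp_regret c f (mo mu b c, S1, S2, P1, P2)"
      unfolding T_def using exp_mo[OF mu, where l=b and l'=c and f=f] abc by simp
    also have "\<dots> \<le> regret c f" by (rule regret_ge[OF fb mo_valid[OF v]])
    finally show ?thesis .
  qed
  obtain t where t: "0 \<le> t" "t \<le> 1" "mu = t * mo mu b a + (1-t) * mo mu b c"
    using between_comb[OF conjunct1[OF mo_between[OF mu abc]] conjunct2[OF mo_between[OF mu abc]]]
    by auto
  have ba: "0 \<le> mo mu b a" "mo mu b a \<le> 1" "0 \<le> mo mu b c" "mo mu b c \<le> 1"
    using mo_bounds[OF mu] by (auto simp: less_imp_le)
  have pair: "Tm A B y mu \<le> t*Tm A B y (mo mu b a) + (1-t)*Tm A B y (mo mu b c)"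
    if "0 \<le> A" "0 \<le> B" for A B y
  proof -
    have "Tm A B y (t * mo mu b a + (1-t) * mo mu b c) \<le> t*Tm A B y (mo mu b a) + (1-t)*Tm A B y (mo mu b c)"
      by (rule Tm_convex) (use that t ba in auto)
    then show ?thesis by (simp only: t(3)[symmetric])
  qed
  have "T mu \<le> t * T (mo mu b a) + (1-t) * T (mo mu b c)"
    unfolding T_def sum_distrib_left sum.distrib[symmetric]
    by (intro sum_mono pair) (use n1 n2 in \<open>auto simp: mult_nonneg_nonneg\<close>)
  also have "\<dots> \<le> t * max (regret a f) (regret c f) + (1-t) * max (regret a f) (regret c f)"
    using ea ec t by (intro add_mono mult_left_mono) auto
  also have "\<dots> = max (regret a f) (regret c f)" by (simp add: algebra_simps)
  finally show "exp_regret b f \<theta> \<le> max (regret a f) (regret c f)" using eb by simp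
qed

lemma regL:
  assumes fb: "\<forall>x y. 0 \<le> x \<and> x \<le> 1 \<and> 0 \<le> y \<and> y \<le> 1 \<longrightarrow> 0 \<le> f x y \<and> f x y \<le> 1"
  and l: "0 < l" and r: "r < regret l f"
  shows "\<exists>d>0. \<forall>l'. 0 < l' \<and> l' \<le> 1 \<and> \<bar>l' - l\<bar> < d \<longrightarrow> r < regret l' f"
proof -
  obtain \<theta> where th: "\<theta> \<in> Theta" and rt: "r < exp_regret l f \<theta>"
    using r unfolding regret_def using less_cSUP_iff[OF Theta_ne bdd[OF fb]] by blast
  obtain mu S1 S2 P1 P2 where te: "\<theta> = (mu, S1, S2, P1, P2)" by (cases \<theta>) auto
  have v: "valid_IS (mu, S1, S2, P1, P2)" using th te unfolding Theta_def by simp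
  then have mu: "0 < mu" "mu < 1" and c1: "cond_dist S1 P1" and c2: "cond_dist S2 P2"
    by (auto simp: valid_unfold)
  have n1: "\<And>w s. 0 \<le> P1 w s" and n2: "\<And>w s. 0 \<le> P2 w s"
    using c1 c2 unfolding cond_dist_def by auto
  define g where "g = (\<lambda>x. \<Sum>s1\<in>S1. \<Sum>s2\<in>S2. Tm (P1 True s1 * P2 True s2) (P1 False s1 * P2 False s2)
        (f (report mu P1 s1 l) (report mu P2 s2 l)) (mo mu l x))"
  have gl: "g l = exp_regret l f \<theta>"
    unfolding g_def te exp_regret_Tm mo_self[OF mu l[THEN less_imp_neq, symmetric]] ..
  have gle: "g x \<le> regret x f" if "0 < x" for x
  proof -
    have "g x = exp_regret x f (mo mu l x, S1, S2, P1, P2)"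
      unfolding g_def using exp_mo[OF mu, where l=l and l'=x and f=f] that by simp
    also have "\<dots> \<le> regret x f" by (rule regret_ge[OF fb mo_valid[OF v]])
    finally show ?thesis .
  qed
  have mb: "0 < mo mu l l" "mo mu l l < 1" using mo_bounds[OF mu] by auto
  have cont: "isCont g l"
    unfolding g_def
    by (intro continuous_intros isCont_Tm isCont_mo mu mb) (use n1 n2 l in \<open>auto simp: mult_nonneg_nonneg\<close>)
  then have "g \<midarrow>l\<rightarrow> g l" by (simp add: isCont_def)
  then obtain d where d: "d > 0" "\<forall>x. x \<noteq> l \<and> norm (x - l) < d \<longrightarrow> norm (g x - g l) < g l - r"
    unfolding LIM_eq using rt gl by (metis diff_gt_0_iff_gt)
  show ?thesis
  proof (intro exI[of _ d] conjI allI impI)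
    fix x assume x: "0 < x \<and> x \<le> 1 \<and> \<bar>x - l\<bar> < d"
    have "r < g x"
    proof (cases "x = l")
      case True then show ?thesis using rt gl by simp
    next
      case False then show ?thesis using d x by force
    qed
    then show "r < regret x f" using gle x by force
  qed (rule d(1))
qed

theorem mainTheorem1:
  fixes f :: "real \<Rightarrow> real \<Rightarrow> real"
  assumes "\<forall>x y. 0 \<le> x \<and> x \<le> 1 \<and> 0 \<le> y \<and> y \<le> 1 \<longrightarrow> 0 \<le> f x y \<and> f x y \<le> 1"
  shows "mono_on {0<..1} (\<lambda>lam. regret lam f)
       \<or> antimono_on {0<..1} (\<lambda>lam. regret lam f)
       \<or> (\<exists>lam0\<in>{0<..1}.
            (\<forall>a b. 0 < a \<and> a \<le> b \<and> b \<le> lam0 \<longrightarrow> regret b f \<le> regret a f)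
          \<and> (\<forall>a b. lam0 \<le> a \<and> a \<le> b \<and> b \<le> 1 \<longrightarrow> regret a f \<le> regret b f))"
  by (rule trough_abstract[where R = "\<lambda>lam. regret lam f", simplified])
     (use regQ[OF assms] regL[OF assms] in auto)

end
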